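(* For each $k\in\mathbb{Z}_{\geq0}$, the set \[ S_k=\left\{F([u]):=\frac{\delta^l(l_u)[1\oplus\cdots\oplus1]}{|(\mathbb{Z}_{k+1})_u|\sqrt{|[u]|}}\ \middle|\ [u]\in [n]^{k+1}/\mathbb{Z}_{k+1}\right\}\subset\big[(\mathbb{C}^n)^{\otimes k}\big]^n \] (which is well defined, i.e. $F([u])$ does not depend on the representative $u$ of the orbit) is an orthonormal basis of the subspace $\delta^l\big((\mathbb{C}^l_{\langle n\rangle})_{k+1}\big)[1\oplus\cdots\oplus1]$ of $\mathcal{F}(\mathbb{C}^n)^n$.
   Context: Let $n\geq1$, $\{e_1,\dots,e_n\}$ an orthonormal basis of $\mathbb{C}^n$, $\{f_1,\dots,f_n\}$ the standard basis of $\mathbb{C}^n$. The full Fock space is $\mathcal{F}(\mathbb{C}^n)=\mathbb{C}1\oplus\bigoplus_{k\geq1}(\mathbb{C}^n)^{\otimes k}$. Let $[n]^k$ be the set of words $i_1\cdots i_k$ of length $k$ over $[n]=\{1,\dots,n\}$, $e_{i_1\cdots i_k}=e_{i_1}\otimes\cdots\otimes e_{i_k}$, $e_\epsilon=1$. Let $l_j$ be the left creation operator $l_je_w=e_{jw}$, and for a word $u=u_1\cdots u_p$ put $l_u=l_{u_1}\cdots l_{u_p}$. Let $\mathbb{C}^l_{\langle n\rangle}$ be the unital algebra generated by $l_1,\dots,l_n$ and $(\mathbb{C}^l_{\langle n\rangle})_{k+1}$ the linear span of the monomials $l_u$, $u\in[n]^{k+1}$. The cyclic gradient $\delta^l:\mathbb{C}^l_{\langle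 n\rangle}\to(\mathbb{C}^l_{\langle n\rangle})^n\cong\mathbb{C}^l_{\langle n\rangle}\otimes\mathbb{C}^n$ is the linear map with $\delta^l(l_{i_1}\cdots l_{i_p})=\sum_{j=1}^p l_{i_{j+1}}\cdots l_{i_p}l_{i_1}\cdots l_{i_{j-1}}\otimes f_{i_j}$. For $(x_1,\dots,x_n)$ a tuple of operators, $(x_1,\dots,x_n)[1\oplus\cdots\oplus1]=(x_11,\dots,x_n1)\in\mathcal{F}(\mathbb{C}^n)^n$; for a subspace $V$ of tuples, $V[1\oplus\cdots\oplus1]$ is the set of such images. The cyclic group $\mathbb{Z}_{k}=\mathbb{Z}/k\mathbb{Z}$ acts on $[n]^{k}$ via the rotation $R(i_1\cdots i_{k-1}i_k)=i_ki_1\cdots i_{k-1}$; $[u]$ denotes the orbit of $u$, $|[u]|$ its cardinality, $(\mathbb{Z}_k)_u=\{g\in\mathbb{Z}_k: gu=u\}$ the stabilizer, and $[n]^k/\mathbb{Z}_k$ the set of orbits. *)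

theory Defs
  imports Complex_Main
begin

(* A vector of the full Fock space F(C^n) is represented by its (finitely supported)
   coefficient function w \<mapsto> <x, e_w>, w a word; e_\<epsilon> = e_[] is the vacuum 1. *)

type_synonym fock = "nat list \<Rightarrow> complex"

(* an element of F(C^n)^n: component i (1 \<le> i \<le> n) *)
type_synonym fock_tuple = "nat \<Rightarrow> fock"

definition words :: "nat \<Rightarrow> nat \<Rightarrow> nat list set" where
  "words n k = {w. length w = k \<and> set w \<subseteq> {1..n}}"

definition vac :: fock where
  "vac = (\<lambda>w. if w = [] then 1 else 0)"

(* left creation operator l_j e_w = e_{jw} *)
definition lcre :: "nat \<Rightarrow> fock \<Rightarrow> fock" where
  "lcre j x = (\<lambda>w. case w of [] \<Rightarrow> 0 | a # v \<Rightarrow> (if a = j then x v else 0))"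

definition lmon :: "nat list \<Rightarrow> fock \<Rightarrow> fock" where
  "lmon u = foldr (\<lambda>j f. lcre j \<circ> f) u id"

(* \<delta>^l(l_u)[1 \<oplus> ... \<oplus> 1]:  component i is
   \<Sum>_{j : u_j = i} l_{u_{j+1}...u_p u_1...u_{j-1}} 1  (0-based list index j) *)
definition cgrad_vac :: "nat list \<Rightarrow> fock_tuple" where
  "cgrad_vac u = (\<lambda>i w. \<Sum>j<length u.
      if u ! j = i then lmon (drop (Suc j) u @ take j u) vac w else 0)"

(* \<delta>^l((C^l_<n>)_{k+1})[1 \<oplus> ... \<oplus> 1]: images of all \<Sum>_u c_u l_u, u \<in> [n]^{k+1} *)
definition cgrad_image :: "nat \<Rightarrow> nat \<Rightarrow> fock_tuple set" where
  "cgrad_image n k = {(\<lambda>i w. \<Sum>u\<in>words n (Suc k). c u * cgrad_vac u i w) | c. True}"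

(* inner products (linear in first argument) *)
definition fock_inner :: "fock \<Rightarrow> fock \<Rightarrow> complex" where
  "fock_inner x y = (\<Sum>w\<in>{w. x w \<noteq> 0 \<and> y w \<noteq> 0}. x w * cnj (y w))"

definition tuple_inner :: "nat \<Rightarrow> fock_tuple \<Rightarrow> fock_tuple \<Rightarrow> complex" where
  "tuple_inner n x y = (\<Sum>i=1..n. fock_inner (x i) (y i))"

definition tuple_span :: "fock_tuple set \<Rightarrow> fock_tuple set" where
  "tuple_span S = {x. \<exists>T c. finite T \<and> T \<subseteq> S \<and> x = (\<lambda>i w. \<Sum>s\<in>T. c s * s i w)}"

definition is_onb :: "nat \<Rightarrow> fock_tuple set \<Rightarrow> fock_tuple set \<Rightarrow> bool" where
  "is_onb n S V \<longleftrightarrow> S \<subseteq> V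
     \<and> (\<forall>x\<in>S. \<forall>y\<in>S. tuple_inner n x y = (if x = y then 1 else 0))
     \<and> V \<subseteq> tuple_span S"

definition rot :: "nat list \<Rightarrow> nat list" where
  "rot w = (if w = [] then [] else last w # butlast w)"

definition orbit :: "nat list \<Rightarrow> nat list set" where
  "orbit u = {(rot ^^ g) u | g. g < length u}"

definition stab :: "nat list \<Rightarrow> nat set" where
  "stab u = {g. g < length u \<and> (rot ^^ g) u = u}"

definition orbits :: "nat \<Rightarrow> nat \<Rightarrow> nat list set set" where
  "orbits n m = orbit ` words n m"

definition Fvec :: "nat list \<Rightarrow> fock_tuple" where
  "Fvec u = (\<lambda>i w. cgrad_vac u i w /
      (of_nat (card (stab u)) * complex_of_real (sqrt (real (card (orbit u))))))"

definition Forb :: "nat list set \<Rightarrow> fock_tuple" where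
  "Forb Orb = Fvec (SOME u. u \<in> Orb)"

definition S_set :: "nat \<Rightarrow> nat \<Rightarrow> fock_tuple set" where
  "S_set n k = Forb ` orbits n (Suc k)"

end

theory Submission
  imports Defs
begin

lemma rotate1_rot: "rotate1 (rot w) = w"
  by (cases w rule: rev_cases) (auto simp: rot_def)

lemma rot_rotate1: "rot (rotate1 w) = w"
  by (cases w) (auto simp: rot_def)

lemma len_rot[simp]: "length (rot w) = length w"
  by (cases w rule: rev_cases) (auto simp: rot_def)

lemma len_rotpow[simp]: "length ((rot ^^ g) w) = length w"
  by (induct g) auto

lemma rotate_rotpow: "rotate g ((rot ^^ g) w) = w"
  by (induct g arbitrary: w) (auto simp: rotate1_rotate_swap rotate1_rot)

lemma rotpow_rotate: "(rot ^^ g) (rotate g w) = w"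
  by (induct g arbitrary: w) (auto simp: funpow_Suc_right rotate1_rotate_swap rot_rotate1)

lemma rotate_inj: "rotate m x = rotate m y \<Longrightarrow> x = y"
proof (induct m arbitrary: x y)
  case (Suc m)
  from Suc.prems have "rotate1 (rotate m x) = rotate1 (rotate m y)" by simp
  then have "rotate m x = rotate m y" by (rule injD[OF inj_rotate1])
  then show ?case by (rule Suc.hyps)
qed simp

lemma rotpow_eq_rotate: "(m + g) mod length w = 0 \<Longrightarrow> (rot ^^ g) w = rotate m w"
proof -
  assume h: "(m + g) mod length w = 0"
  have "rotate m w = rotate m (rotate g ((rot ^^ g) w))" by (simp add: rotate_rotpow)
  also have "\<dots> = rotate (m+g) ((rot ^^ g) w)" by (simp add: rotate_rotate)
  also have "\<dots> = (rot ^^ g) w" using h by simp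
  finally show ?thesis by simp
qed

lemma stab_eq: "stab u = {g. g < length u \<and> rotate g u = u}"
  unfolding stab_def using rotate_rotpow rotpow_rotate by metis

lemma orbit_eq: "u \<noteq> [] \<Longrightarrow> orbit u = {rotate r u | r. r < length u}"
proof safe
  fix x assume "u \<noteq> []" "x \<in> orbit u"
  then obtain g where g: "g < length u" "x = (rot ^^ g) u" by (auto simp: orbit_def)
  define m where "m = (length u - g) mod length u"
  have "(m + g) mod length u = 0" unfolding m_def using g
    by (cases "g = 0") (auto simp: mod_add_left_eq[symmetric])
  then have "x = rotate m u" using g rotpow_eq_rotate by metis
  moreover have "m < length u" using \<open>u \<noteq> []\<close> by (simp add: m_def)
  ultimately show "\<exists>r. x = rotate r u \<and> r < length u" by blast
next
  fix r assume "u \<noteq> []" "r < length u"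
  define g where "g = (length u - r) mod length u"
  have "(r + g) mod length u = 0" unfolding g_def using \<open>r < length u\<close>
    by (cases "r = 0") (auto simp: mod_add_right_eq[symmetric])
  then have "rotate r u = (rot ^^ g) u" using rotpow_eq_rotate by metis
  moreover have "g < length u" using \<open>u \<noteq> []\<close> by (simp add: g_def)
  ultimately show "rotate r u \<in> orbit u" by (auto simp: orbit_def)
qed

lemma shift_card:
  fixes f :: "nat \<Rightarrow> 'a"
  assumes L: "L > 0" and per: "\<And>r. f (r mod L) = f r"
  shows "card {r. r < L \<and> P (f (r + a))} = card {r. r < L \<and> P (f r)}"
proof -
  have "bij_betw (\<lambda>r. (r + a) mod L) {r. r < L \<and> P (f (r + a))} {r. r < L \<and> P (f r)}"
  proof (rule bij_betw_byWitness[where f' = "\<lambda>r. (r + (L - a mod L)) mod L"])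
    show "\<forall>x\<in>{r. r < L \<and> P (f (r + a))}. (((x + a) mod L) + (L - a mod L)) mod L = x"
    proof
      fix x assume "x \<in> {r. r < L \<and> P (f (r + a))}"
      then have x: "x < L" by simp
      have "(((x + a) mod L) + (L - a mod L)) mod L = (x + a + (L - a mod L)) mod L"
        by (simp add: mod_add_left_eq)
      also have "x + a + (L - a mod L) = x + L + (a div L) * L"
        using L mod_less_divisor[OF L, of a] div_mult_mod_eq[of a L] by linarith
      also have "(x + L + (a div L) * L) mod L = x" using x by simp
      finally show "(((x + a) mod L) + (L - a mod L)) mod L = x" .
    qed
    show "\<forall>y\<in>{r. r < L \<and> P (f r)}. ((y + (L - a mod L)) mod L + a) mod L = y"
    proof
      fix x assume "x \<in> {r. r < L \<and> P (f r)}"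
      then have x: "x < L" by simp
      have "((x + (L - a mod L)) mod L + a) mod L = (x + (L - a mod L) + a) mod L"
        by (simp add: mod_add_left_eq)
      also have "x + (L - a mod L) + a = x + L + (a div L) * L"
        using L mod_less_divisor[OF L, of a] div_mult_mod_eq[of a L] by linarith
      also have "(x + L + (a div L) * L) mod L = x" using x by simp
      finally show "((x + (L - a mod L)) mod L + a) mod L = x" .
    qed
    show "(\<lambda>r. (r + a) mod L) ` {r. r < L \<and> P (f (r + a))} \<subseteq> {r. r < L \<and> P (f r)}"
    proof safe
      fix x assume "x < L" "P (f (x + a))"
      then show "P (f ((x + a) mod L))" using per[of "x + a"] by simp
    qed (use L in simp)
    show "(\<lambda>r. (r + (L - a mod L)) mod L) ` {r. r < L \<and> P (f r)} \<subseteq> {r. r < L \<and> P (f (r + a))}"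
    proof safe
      fix x assume x: "x < L" "P (f x)"
      have "f ((x + (L - a mod L)) mod L + a) = f (((x + (L - a mod L)) mod L + a) mod L)"
        by (rule per[symmetric])
      also have "((x + (L - a mod L)) mod L + a) mod L = (x + (L - a mod L) + a) mod L"
        by (simp add: mod_add_left_eq)
      also have "x + (L - a mod L) + a = x + L + (a div L) * L"
        using L mod_less_divisor[OF L, of a] div_mult_mod_eq[of a L] by linarith
      also have "(x + L + (a div L) * L) mod L = x" using x by simp
      finally show "P (f ((x + (L - a mod L)) mod L + a))" using x by simp
    qed (use L in simp)
  qed
  then show ?thesis by (rule bij_betw_same_card)
qed


lemma lmon_Cons: "lmon (a # v) = lcre a \<circ> lmon v"
  by (simp add: lmon_def)

lemma lmon_vac: "lmon v vac w = (if w = v then 1 else 0)"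
proof (induct v arbitrary: w)
  case Nil then show ?case by (simp add: lmon_def vac_def)
next
  case (Cons a v) then show ?case
    by (cases w) (auto simp: lmon_Cons lcre_def)
qed

definition NN :: "nat list \<Rightarrow> nat list \<Rightarrow> nat" where
  "NN u x = card {r. r < length u \<and> rotate r u = x}"

lemma rotate_Suc_dt: "j < length u \<Longrightarrow> rotate (Suc j) u = drop (Suc j) u @ take j u @ [u ! j]"
proof -
  assume j: "j < length u"
  have "rotate (Suc j) u = drop (Suc j) u @ take (Suc j) u"
  proof (cases "Suc j = length u")
    case True then show ?thesis by simp
  next
    case False then show ?thesis using j by (simp add: rotate_drop_take)
  qed
  then show ?thesis using j by (simp add: take_Suc_conv_app_nth)
qed

lemma cgrad_NN: "cgrad_vac u i w = of_nat (NN u (w @ [i]))"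
proof (cases "u = []")
  case True then show ?thesis by (simp add: cgrad_vac_def NN_def)
next
  case False
  have "cgrad_vac u i w = (\<Sum>j<length u. of_bool (rotate (Suc j) u = w @ [i]))"
    unfolding cgrad_vac_def lmon_vac
  proof (rule sum.cong)
    fix j assume "j \<in> {..<length u}"
    then have "rotate (Suc j) u = (drop (Suc j) u @ take j u) @ [u ! j]"
      by (simp add: rotate_Suc_dt del: rotate_Suc)
    then have "(u ! j = i \<and> w = drop (Suc j) u @ take j u) = (rotate (Suc j) u = w @ [i])"
      by (metis append1_eq_conv)
    then show "(if u ! j = i then if w = drop (Suc j) u @ take j u then 1 else 0 else 0) =
      (of_bool (rotate (Suc j) u = w @ [i]) :: complex)"
      by auto
  qed simp
  also have "\<dots> = of_nat (card {j. j < length u \<and> rotate (j + 1) u = w @ [i]})"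
    by (simp add: Int_def)
  also have "card {j. j < length u \<and> rotate (j + 1) u = w @ [i]} = NN u (w @ [i])"
    unfolding NN_def
    using shift_card[of "length u" "\<lambda>r. rotate r u" "\<lambda>y. y = w @ [i]" 1] False
    by (simp add: rotate_conv_mod[symmetric])
  finally show ?thesis .
qed

lemma NN_pos: "u \<noteq> [] \<Longrightarrow> (0 < NN u x \<longleftrightarrow> x \<in> orbit u)"
  by (auto simp: NN_def orbit_eq card_gt_0_iff)

lemma NN_rotate: "NN (rotate a u) x = NN u x"
proof (cases "u = []")
  case True then show ?thesis by simp
next
  case False
  have "NN (rotate a u) x = card {r. r < length u \<and> rotate (r + a) u = x}"
    by (simp add: NN_def rotate_rotate)
  also have "\<dots> = NN u x" unfolding NN_def
    using shift_card[of "length u" "\<lambda>r. rotate r u" "\<lambda>y. y = x" a] False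
    by (simp add: rotate_conv_mod[symmetric])
  finally show ?thesis .
qed

lemma NN_orbit: "u \<noteq> [] \<Longrightarrow> x \<in> orbit u \<Longrightarrow> NN u x = NN u u"
proof -
  assume u: "u \<noteq> []" and "x \<in> orbit u"
  then obtain a where x: "x = rotate a u" by (auto simp: orbit_eq)
  have "NN u u = card {r. r < length u \<and> rotate (r + a) u = rotate a u}"
    unfolding NN_def
  proof (rule arg_cong[where f = card], rule Collect_cong)
    fix r
    have "rotate (r + a) u = rotate a (rotate r u)" by (simp add: rotate_rotate add.commute)
    then show "(r < length u \<and> rotate r u = u) = (r < length u \<and> rotate (r + a) u = rotate a u)"
      using rotate_inj by metis
  qed
  also have "\<dots> = NN u x" unfolding NN_def x
    using shift_card[of "length u" "\<lambda>r. rotate r u" "\<lambda>y. y = rotate a u" a] u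
    by (simp add: rotate_conv_mod[symmetric])
  finally show ?thesis by simp
qed

lemma NN_self_pos: "u \<noteq> [] \<Longrightarrow> 0 < NN u u"
  using NN_pos[of u u] by (auto simp: orbit_eq intro: exI[of _ 0])

lemma card_stab: "card (stab u) = NN u u"
  by (simp add: stab_eq NN_def)

lemma orbit_NN: "u \<noteq> [] \<Longrightarrow> orbit u = {x. 0 < NN u x}"
  using NN_pos by auto

lemma orbit_rotate: "u \<noteq> [] \<Longrightarrow> orbit (rotate a u) = orbit u"
  using orbit_NN[of u] orbit_NN[of "rotate a u"] NN_rotate[of a u] by simp

lemma orbit_mem: "u \<noteq> [] \<Longrightarrow> v \<in> orbit u \<Longrightarrow> orbit v = orbit u \<and> (\<forall>x. NN v x = NN u x)"
proof -
  assume "u \<noteq> []" "v \<in> orbit u"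
  then obtain a where "v = rotate a u" by (auto simp: orbit_eq)
  then show ?thesis using \<open>u \<noteq> []\<close> by (simp add: orbit_rotate NN_rotate)
qed

lemma self_orbit: "u \<noteq> [] \<Longrightarrow> u \<in> orbit u"
  by (auto simp: orbit_eq intro: exI[of _ 0])

lemma finite_orbit: "u \<noteq> [] \<Longrightarrow> finite (orbit u)"
  by (simp add: orbit_eq)

lemma Fvec_inv: "u \<noteq> [] \<Longrightarrow> v \<in> orbit u \<Longrightarrow> Fvec v = Fvec u"
  using orbit_mem[of u v] NN_orbit[of u v] by (simp add: Fvec_def cgrad_NN card_stab)

lemma Fvec_formula: "u \<noteq> [] \<Longrightarrow>
  Fvec u i w = (if w @ [i] \<in> orbit u then inverse (complex_of_real (sqrt (real (card (orbit u))))) else 0)"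
  using NN_orbit[of u "w @ [i]"] NN_pos[of u "w @ [i]"] NN_self_pos[of u]
  by (auto simp: Fvec_def cgrad_NN card_stab field_simps)


lemma words_ne: "u \<in> words n (Suc k) \<Longrightarrow> u \<noteq> []"
  by (auto simp: words_def)

lemma orbit_sub: assumes "u \<in> words n m" shows "orbit u \<subseteq> words n m"
  using assms
proof (cases "u = []")
  case True then show ?thesis by (simp add: orbit_def)
next
  case False then show "u \<in> words n m \<Longrightarrow> ?thesis" by (auto simp: orbit_eq words_def)
qed

lemma finite_words: "finite (words n m)"
proof -
  have "words n m = {xs. set xs \<subseteq> {1..n} \<and> length xs = m}" by (auto simp: words_def)
  then show ?thesis using finite_lists_length_eq[of "{1..n}" m] by simp
qed

lemma card_last_split:
  assumes Ob: "Ob \<subseteq> words n (Suc k)"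
  shows "(\<Sum>i=1..n. card {w. w @ [i] \<in> Ob}) = card Ob"
proof -
  have fO: "finite Ob" using Ob finite_words finite_subset by blast
  have lastin: "last ` Ob \<subseteq> {1..n}"
  proof
    fix y assume "y \<in> last ` Ob"
    then obtain x where x: "x \<in> Ob" "y = last x" by auto
    then have "x \<noteq> []" "set x \<subseteq> {1..n}" using Ob by (auto simp: words_def)
    then show "y \<in> {1..n}" using x last_in_set[OF \<open>x \<noteq> []\<close>] by blast
  qed
  have "card Ob = (\<Sum>x\<in>Ob. 1)" by simp
  also have "\<dots> = (\<Sum>i=1..n. \<Sum>x\<in>{x. x \<in> Ob \<and> last x = i}. 1)"
    using sum.group[OF fO finite_atLeastAtMost lastin, of "\<lambda>_. 1 :: nat"] by simp
  also have "\<dots> = (\<Sum>i=1..n. card {w. w @ [i] \<in> Ob})"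
  proof (rule sum.cong)
    fix i
    have "{x. x \<in> Ob \<and> last x = i} = (\<lambda>w. w @ [i]) ` {w. w @ [i] \<in> Ob}"
    proof safe
      fix x assume "x \<in> Ob" "i = last x"
      then have "x \<noteq> []" using Ob by (auto simp: words_def)
      then have "x = butlast x @ [last x]" by simp
      then show "x \<in> (\<lambda>w. w @ [last x]) ` {w. w @ [last x] \<in> Ob}"
        using \<open>x \<in> Ob\<close> by (metis (mono_tags, lifting) image_eqI mem_Collect_eq)
    qed auto
    moreover have "inj_on (\<lambda>w. w @ [i]) {w. w @ [i] \<in> Ob}" by (auto simp: inj_on_def)
    ultimately show "(\<Sum>x\<in>{x. x \<in> Ob \<and> last x = i}. 1) = card {w. w @ [i] \<in> Ob}"
      by (simp add: card_image)
  qed simp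
  finally show ?thesis by simp
qed

lemma orbit_disj: "u \<noteq> [] \<Longrightarrow> v \<noteq> [] \<Longrightarrow> x \<in> orbit u \<Longrightarrow> x \<in> orbit v \<Longrightarrow> orbit u = orbit v"
  using orbit_mem by metis

lemma inner_formula:
  assumes u: "u \<in> words n (Suc k)" and v: "v \<in> words n (Suc k)"
  shows "tuple_inner n (Fvec u) (Fvec v) = (if orbit u = orbit v then 1 else 0)"
proof -
  have un: "u \<noteq> []" and vn: "v \<noteq> []" using u v words_ne by auto
  define s where "s u = inverse (complex_of_real (sqrt (real (card (orbit u)))))" for u
  have cpos: "0 < card (orbit u)" using finite_orbit[OF un] self_orbit[OF un] card_gt_0_iff by blast
  have sne: "s u \<noteq> 0" "s v \<noteq> 0" unfolding s_def using cpos
     finite_orbit[OF vn] self_orbit[OF vn] card_gt_0_iff by auto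
  have Fu: "Fvec u i w = (if w @ [i] \<in> orbit u then s u else 0)" for i w
    using Fvec_formula[OF un] s_def by simp
  have Fv: "Fvec v i w = (if w @ [i] \<in> orbit v then s v else 0)" for i w
    using Fvec_formula[OF vn] s_def by simp
  have fi: "fock_inner (Fvec u i) (Fvec v i) =
     (\<Sum>w\<in>{w. w @ [i] \<in> orbit u \<and> w @ [i] \<in> orbit v}. s u * cnj (s v))" for i
    unfolding fock_inner_def
  proof (rule sum.cong)
    show "{w. Fvec u i w \<noteq> 0 \<and> Fvec v i w \<noteq> 0} = {w. w @ [i] \<in> orbit u \<and> w @ [i] \<in> orbit v}"
      using sne by (auto simp: Fu Fv)
  qed (auto simp: Fu Fv)
  show ?thesis
  proof (cases "orbit u = orbit v")
    case False
    then have e: "{w. w @ [i] \<in> orbit u \<and> w @ [i] \<in> orbit v} = {}" for i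
      using orbit_disj[OF un vn] by blast
    have "fock_inner (Fvec u i) (Fvec v i) = 0" for i
      by (simp only: fi e sum.empty)
    then show ?thesis using False by (simp add: tuple_inner_def)
  next
    case True
    have "s v = s u" unfolding s_def using True by simp
    have ss: "s u * cnj (s u) = inverse (of_nat (card (orbit u)))"
      unfolding s_def using cpos
      by (simp add: complex_eq_iff power2_eq_square[symmetric] field_simps)
    have "tuple_inner n (Fvec u) (Fvec v) =
       (\<Sum>i=1..n. of_nat (card {w. w @ [i] \<in> orbit u}) * (s u * cnj (s u)))"
      unfolding tuple_inner_def fi using True \<open>s v = s u\<close> by simp
    also have "\<dots> = of_nat (\<Sum>i=1..n. card {w. w @ [i] \<in> orbit u}) * (s u * cnj (s u))"
      by (simp add: sum_distrib_right)
    also have "\<dots> = 1" using card_last_split[OF orbit_sub[OF u]] ss cpos by simp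
    finally show ?thesis using True by simp
  qed
qed

lemma S_set_eq: "S_set n k = Fvec ` words n (Suc k)"
proof -
  have "Forb (orbit u) = Fvec u" if "u \<in> words n (Suc k)" for u
  proof -
    have un: "u \<noteq> []" using that words_ne by auto
    have "(SOME v. v \<in> orbit u) \<in> orbit u" using self_orbit[OF un] by (rule someI)
    then show ?thesis unfolding Forb_def using Fvec_inv[OF un] by blast
  qed
  then show ?thesis unfolding S_set_def orbits_def by (auto simp: image_image)
qed

theorem theorem3p1:
  fixes n k :: nat
  assumes "n \<ge> 1"
  shows "(\<forall>u\<in>words n (Suc k). \<forall>v\<in>orbit u. Fvec v = Fvec u)
         \<and> is_onb n (S_set n k) (cgrad_image n k)"
proof -
  let ?W = "words n (Suc k)"
  define K where "K u = of_nat (card (stab u)) * complex_of_real (sqrt (real (card (orbit u))))" for u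
  have Kne: "K u \<noteq> 0" if "u \<in> ?W" for u
  proof -
    have un: "u \<noteq> []" using that words_ne by auto
    have "0 < card (orbit u)" using finite_orbit[OF un] self_orbit[OF un] card_gt_0_iff by blast
    then show ?thesis unfolding K_def using NN_self_pos[OF un] card_stab[of u] by simp
  qed
  have cgK: "cgrad_vac u i w = K u * Fvec u i w" if "u \<in> ?W" for u i w
    using Kne[OF that] unfolding Fvec_def K_def by simp
  have P1: "\<forall>u\<in>?W. \<forall>v\<in>orbit u. Fvec v = Fvec u"
    using Fvec_inv words_ne by blast
  have A: "S_set n k \<subseteq> cgrad_image n k"
  proof
    fix x assume "x \<in> S_set n k"
    then obtain u0 where u0: "u0 \<in> ?W" "x = Fvec u0" by (auto simp: S_set_eq)
    define c where "c u = (if u = u0 then inverse (K u0) else 0)" for u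
    have "x = (\<lambda>i w. \<Sum>u\<in>?W. c u * cgrad_vac u i w)"
    proof (intro ext)
      fix i w
      have "(\<Sum>u\<in>?W. c u * cgrad_vac u i w) = (\<Sum>u\<in>?W. if u = u0 then Fvec u0 i w else 0)"
        by (rule sum.cong) (use Kne[OF u0(1)] cgK[OF u0(1)] in \<open>auto simp: c_def\<close>)
      also have "\<dots> = Fvec u0 i w" using u0(1) finite_words[of n "Suc k"] by simp
      finally show "x i w = (\<Sum>u\<in>?W. c u * cgrad_vac u i w)" using u0 by simp
    qed
    then show "x \<in> cgrad_image n k" unfolding cgrad_image_def
      by (intro CollectI exI[of _ c] conjI TrueI)
  qed
  have B: "\<forall>x\<in>S_set n k. \<forall>y\<in>S_set n k. tuple_inner n x y = (if x = y then 1 else 0)"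
  proof (intro ballI)
    fix x y assume "x \<in> S_set n k" "y \<in> S_set n k"
    then obtain u v where uv: "u \<in> ?W" "v \<in> ?W" "x = Fvec u" "y = Fvec v"
      by (auto simp: S_set_eq)
    have "(Fvec u = Fvec v) = (orbit u = orbit v)"
    proof
      assume "Fvec u = Fvec v"
      then have "tuple_inner n (Fvec u) (Fvec v) = 1" using inner_formula[OF uv(1) uv(1)] by simp
      then show "orbit u = orbit v" using inner_formula[OF uv(1) uv(2)] by (auto split: if_splits)
    next
      assume "orbit u = orbit v"
      then have "v \<in> orbit u" using self_orbit[OF words_ne[OF uv(2)]] by simp
      then show "Fvec u = Fvec v" using P1 uv(1) by simp
    qed
    then show "tuple_inner n x y = (if x = y then 1 else 0)"
      using inner_formula[OF uv(1) uv(2)] uv by simp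
  qed
  have C: "cgrad_image n k \<subseteq> tuple_span (S_set n k)"
  proof
    fix x assume "x \<in> cgrad_image n k"
    then obtain c where x: "x = (\<lambda>i w. \<Sum>u\<in>?W. c u * cgrad_vac u i w)"
      unfolding cgrad_image_def by blast
    define d where "d s = (\<Sum>u\<in>{u. u \<in> ?W \<and> Fvec u = s}. c u * K u)" for s
    have "x = (\<lambda>i w. \<Sum>s\<in>Fvec ` ?W. d s * s i w)"
    proof (intro ext)
      fix i w
      have "x i w = (\<Sum>u\<in>?W. c u * cgrad_vac u i w)" using x by simp
      also have "\<dots> = (\<Sum>u\<in>?W. c u * K u * Fvec u i w)"
        by (rule sum.cong) (simp_all add: cgK mult.assoc)
      also have "\<dots> = (\<Sum>s\<in>Fvec ` ?W. \<Sum>u\<in>{u. u \<in> ?W \<and> Fvec u = s}. c u * K u * Fvec u i w)"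
        by (rule sum.image_gen[OF finite_words])
      also have "\<dots> = (\<Sum>s\<in>Fvec ` ?W. d s * s i w)"
        unfolding d_def sum_distrib_right
        by (intro sum.cong refl) simp
      finally show "x i w = (\<Sum>s\<in>Fvec ` ?W. d s * s i w)" .
    qed
    then show "x \<in> tuple_span (S_set n k)"
      unfolding tuple_span_def S_set_eq
      by (intro CollectI exI[of _ "Fvec ` ?W"] exI[of _ d] conjI finite_imageI finite_words subset_refl)
  qed
  show ?thesis using P1 A B C unfolding is_onb_def by blast
qed

end
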